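(* Consider a preferential (dynamic) attachment circuit of index $m\ge1$ (model described in the context). For $n\ge1$ let $W_{n-1}$, $B_{n-1}$ be the numbers of white and blue external nodes after $n-1$ insertions, and let $\mathcal{W}_{n-1,m}$, $\mathcal{B}_{n-1,m}$ be the numbers of white and blue external nodes after all $m$ parents of node $n$ have been chosen (not counting the external node of node $n$ itself). Then, for every $n$ with $(m+1)n\ge 5$, $$\mathbb{E}[\mathcal{W}^2_{n-1,m}\mid \mathbb{F}_{n-1,0}]=\frac{(m+1)(n-1)\bigl((mn-m+n-2)W_{n-1}+m\bigr)W_{n-1}}{(mn+n-2)(mn+n-1)},$$ $$\mathbb{E}[\mathcal{B}^2_{n-1,m}\mid \mathbb{F}_{n-1,0}]=\frac{(m+1)(n-1)\bigl(\mathcal{C}_1W_{n-1}^2+\mathcal{C}_2W_{n-1}B_{n-1}+\mathcal{C}_3B_{n-1}^2+\mathcal{C}_4W_{n-1}+\mathcal{C}_5B_{n-1}\bigr)}{(mn+n-4)(mn+n-3)(mn+n-2)(mn+n-1)},$$ where $\mathcal{C}_1=4m(m-1)(mn-m+n-2)$, $\mathcal{C}_2=4m(mn-m+n-3)(mn-m+n-2)$, $\mathcal{C}_3=(mn-m+n-4)(mn-m+n-3)(mn-m+n-2)$, $\mathcal{C}_4=4m(m^2n^2-m^2n+2mn^2+m^2-7mn+n^2+m-6n+10)$, $\mathcal{C}_5=2m(mn-m+n-2)(2mn-m+2n-7)$.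
   Context: Preferential (dynamic) attachment circuit of index $m\ge1$: at time $0$ there is a single node labeled $0$. At each time $n\ge1$ a new node labeled $n$ is added and $m$ parents are chosen for it one at a time, with replacement, among nodes $0,\dots,n-1$. Before the $(i+1)$-th choice ($i=0,\dots,m-1$), each existing node $v$ is chosen with probability $\frac{d_i(v)+1}{\sum_{x}(d_i(x)+1)}$, where $d_i(x)$ is the outdegree of $x$ in the current multigraph including the edges created by the first $i$ choices for node $n$; after each choice an edge from the chosen parent to node $n$ is immediately added (multi-edges allowed, counted with multiplicity). External nodes: a node of outdegree $s$ carries $s+1$ external nodes; they are colored white if the node has outdegree $0$, blue if it has outdegree $1$, red if it has outdegree $\ge2$. During the insertion of node $n$, after $s$ of the $m$ parent choices ($0\le s\le m$), $\mathcal{W}_{n-1,s}$ and $\mathcal{B}_{n-1,s}$ denote the numbers of white and blue external nodes carried by nodes $0,\dots,n-1$; thus $\mathcal{W}_{n-1,0}=W_{n-1}$, $\mathcal{B}_{n-1,0}=B_{n-1}$, and after the sample, node $n$ adds one white external node. $\mathbb{F}_{n-1,0}$ is the $\sigma$-field generated by the evolution of the circuit up to the completion of the insertion of node $n-1$. *)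

theory Defs
  imports "HOL-Probability.Probability"
begin

text \<open>State of the circuit: the outdegree function of the nodes (nodes not yet
present have outdegree 0).  When node n is being inserted the existing nodes
are 0,...,n-1, i.e. the set {..<n}.\<close>

definition choice_mset :: "nat \<Rightarrow> (nat \<Rightarrow> nat) \<Rightarrow> nat multiset" where
  "choice_mset n d = (\<Sum>v\<in>{..<n}. replicate_mset (Suc (d v)) v)"

definition choice_step :: "nat \<Rightarrow> (nat \<Rightarrow> nat) \<Rightarrow> (nat \<Rightarrow> nat) pmf" where
  "choice_step n d = map_pmf (\<lambda>v. d(v := Suc (d v))) (pmf_of_multiset (choice_mset n d))"

fun parents :: "nat \<Rightarrow> nat \<Rightarrow> (nat \<Rightarrow> nat) \<Rightarrow> (nat \<Rightarrow> nat) pmf" where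
  "parents n 0 d = return_pmf d"
| "parents n (Suc s) d = bind_pmf (parents n s d) (choice_step n)"

text \<open>Distribution of the outdegree function after completion of the insertion
of node k (index m); at time 0 only node 0 with outdegree 0.\<close>
fun circuit :: "nat \<Rightarrow> nat \<Rightarrow> (nat \<Rightarrow> nat) pmf" where
  "circuit m 0 = return_pmf (\<lambda>_. 0)"
| "circuit m (Suc k) = bind_pmf (circuit m k) (parents (Suc k) m)"

text \<open>White external nodes among nodes 0..n-1 (outdegree 0 carries one external node).\<close>
definition white :: "nat \<Rightarrow> (nat \<Rightarrow> nat) \<Rightarrow> nat" where
  "white n d = card {v. v < n \<and> d v = 0}"

text \<open>Blue external nodes among nodes 0..n-1 (outdegree 1 carries two external nodes).\<close>
definition blue :: "nat \<Rightarrow> (nat \<Rightarrow> nat) \<Rightarrow> nat" where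
  "blue n d = 2 * card {v. v < n \<and> d v = 1}"

end

theory Submission
  imports Defs
begin

lemma cm_size: "size (choice_mset n d) = (\<Sum>v<n. Suc (d v))"
  by (induction n) (auto simp: choice_mset_def)
lemma cm_count: "count (choice_mset n d) v = (if v < n then Suc (d v) else 0)"
  by (induction n) (auto simp: choice_mset_def)
lemma cm_set: "set_mset (choice_mset n d) = {..<n}"
  unfolding set_mset_def by (auto simp: cm_count)
lemma cm_ne: "n \<ge> 1 \<Longrightarrow> choice_mset n d \<noteq> {#}"
proof
  assume "n \<ge> 1" "choice_mset n d = {#}"
  then have "(0::nat) \<in> set_mset (choice_mset n d)" unfolding cm_set by simp
  then show False using \<open>choice_mset n d = {#}\<close> by simp
qed

lemma set_choice_step: "n \<ge> 1 \<Longrightarrow> set_pmf (choice_step n d) = (\<lambda>v. d(v := Suc (d v))) ` {..<n}"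
  unfolding choice_step_def by (simp only: set_map_pmf set_pmf_of_multiset[OF cm_ne] cm_set)

lemma finite_parents: assumes "n \<ge> 1" shows "finite (set_pmf (parents n s d))"
proof (induction s)
  case 0 then show ?case by simp
next
  case (Suc s)
  have 1: "set_pmf (parents n (Suc s) d) = (\<Union>x\<in>set_pmf (parents n s d). set_pmf (choice_step n x))"
    by (simp only: parents.simps set_bind_pmf)
  have 2: "finite (set_pmf (choice_step n x))" for x
    unfolding set_choice_step[OF assms] by (rule finite_imageI) (rule finite_lessThan)
  show ?case unfolding 1 by (rule finite_UN_I[OF Suc.IH 2])
qed

lemma parents_support:
  assumes "n \<ge> 1" "d' \<in> set_pmf (parents n s d)"
  shows "(\<Sum>v<n. d' v) = (\<Sum>v<n. d v) + s \<and> (\<forall>v. v \<ge> n \<longrightarrow> d' v = d v)"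
  using assms(2)
proof (induction s arbitrary: d')
  case 0 then show ?case by simp
next
  case (Suc s)
  then obtain d0 v where d0: "d0 \<in> set_pmf (parents n s d)" and v: "v < n"
     and dd: "d' = d0(v := Suc (d0 v))"
    using assms(1) by (auto simp: set_choice_step)
  have "(\<Sum>u<n. d' u) = (\<Sum>u<n. d0 u + (if u = v then 1 else 0))"
    by (rule sum.cong) (auto simp: dd)
  also have "\<dots> = (\<Sum>u<n. d0 u) + 1" using v by (simp add: sum.distrib)
  finally show ?case using Suc.IH[OF d0] v dd by auto
qed

lemma circuit_support:
  "d \<in> set_pmf (circuit m k) \<Longrightarrow> (\<forall>v>k. d v = 0) \<and> (\<Sum>v<Suc k. d v) = m * k"
proof (induction k arbitrary: d)
  case 0 then show ?case by simp
next
  case (Suc k)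
  then obtain d0 where d0: "d0 \<in> set_pmf (circuit m k)" and d: "d \<in> set_pmf (parents (Suc k) m d0)"
    by auto
  note IH = Suc.IH[OF d0]
  note P = parents_support[OF _ d, simplified]
  have "(\<Sum>v<Suc (Suc k). d v) = (\<Sum>v<Suc k. d0 v) + m" using P IH by simp
  also have "\<dots> = m * Suc k" using IH by simp
  finally show ?case using P IH by auto
qed


definition Tf :: "nat \<Rightarrow> (nat \<Rightarrow> nat) \<Rightarrow> real" where "Tf n d = real (\<Sum>v<n. Suc (d v))"
definition Wf :: "nat \<Rightarrow> (nat \<Rightarrow> nat) \<Rightarrow> real" where "Wf n d = real (white n d)"
definition Bf :: "nat \<Rightarrow> (nat \<Rightarrow> nat) \<Rightarrow> real" where "Bf n d = real (blue n d)"

lemma white_upd: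
  assumes "v < n"
  shows "Wf n (d(v := Suc (d v))) = (if d v = 0 then Wf n d - 1 else Wf n d)"
proof -
  have e: "{u. u < n \<and> (d(v := Suc (d v))) u = 0} = {u. u < n \<and> d u = 0} - {v}" by auto
  have f: "finite {u. u < n \<and> d u = 0}" by simp
  show ?thesis
  proof (cases "d v = 0")
    case True
    then have "v \<in> {u. u < n \<and> d u = 0}" using assms by simp
    then have "card {u. u < n \<and> d u = 0} \<ge> 1"
      using f by (metis One_nat_def Suc_leI card_gt_0_iff empty_iff)
    then show ?thesis unfolding Wf_def white_def e using True \<open>v \<in> _\<close> f
      by (simp add: card_Diff_singleton of_nat_diff)
  next
    case False
    then have "{u. u < n \<and> d u = 0} - {v} = {u. u < n \<and> d u = 0}" by auto
    then show ?thesis unfolding Wf_def white_def e using False by simp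
  qed
qed

lemma blue_upd:
  assumes "v < n"
  shows "Bf n (d(v := Suc (d v))) = (if d v = 0 then Bf n d + 2 else if d v = 1 then Bf n d - 2 else Bf n d)"
proof -
  let ?S = "{u. u < n \<and> d u = 1}"
  have f: "finite ?S" by simp
  consider "d v = 0" | "d v = 1" | "d v \<noteq> 0 \<and> d v \<noteq> 1" by blast
  then show ?thesis
  proof cases
    case 1
    then have e: "{u. u < n \<and> (d(v := Suc (d v))) u = 1} = insert v ?S" using assms by auto
    have "v \<notin> ?S" using 1 by simp
    then show ?thesis unfolding Bf_def blue_def e using 1 f by simp
  next
    case 2
    then have e: "{u. u < n \<and> (d(v := Suc (d v))) u = 1} = ?S - {v}" using assms by auto
    have "v \<in> ?S" using 2 assms by simp
    then have "card ?S \<ge> 1"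
      using f by (metis One_nat_def Suc_leI card_gt_0_iff empty_iff)
    then show ?thesis unfolding Bf_def blue_def e using 2 \<open>v \<in> ?S\<close> f
      by (simp add: card_Diff_singleton of_nat_diff)
  next
    case 3
    then have e: "{u. u < n \<and> (d(v := Suc (d v))) u = 1} = ?S" using assms by auto
    then show ?thesis unfolding Bf_def blue_def e using 3 by simp
  qed
qed

lemma T_upd:
  assumes "v < n"
  shows "Tf n (d(v := Suc (d v))) = Tf n d + 1"
proof -
  have "(\<Sum>u<n. Suc ((d(v := Suc (d v))) u)) = (\<Sum>u<n. Suc (d u) + (if u = v then 1 else 0))"
    by (rule sum.cong) auto
  also have "\<dots> = (\<Sum>u<n. Suc (d u)) + (\<Sum>u<n. if u = v then 1 else 0)" by (rule sum.distrib)
  also have "(\<Sum>u<n. if u = v then 1 else (0::nat)) = 1" using assms by simp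
  finally show ?thesis unfolding Tf_def by simp
qed

lemma sum_split:
  fixes a b c :: real
  shows "(\<Sum>v<n. real (Suc (d v)) * (if d v = 0 then a else if d v = 1 then b else c))
     = Tf n d * c + Wf n d * (a - c) + Bf n d * (b - c)"
proof -
  have "(\<Sum>v<n. real (Suc (d v)) * (if d v = 0 then a else if d v = 1 then b else c))
     = (\<Sum>v<n. real (Suc (d v)) * c + ((if d v = 0 then a - c else 0) + (if d v = 1 then 2 * (b - c) else 0)))"
    by (rule sum.cong) (auto simp: algebra_simps)
  also have "\<dots> = (\<Sum>v<n. real (Suc (d v))) * c + ((\<Sum>v<n. if d v = 0 then a - c else 0) + (\<Sum>v<n. if d v = 1 then 2 * (b - c) else 0))"
    by (simp only: sum.distrib sum_distrib_right)
  also have "(\<Sum>v<n. if d v = 0 then a - c else 0) = real (card {u. u < n \<and> d u = 0}) * (a - c)"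
  proof -
    have "{..<n} \<inter> {v. d v = 0} = {u. u < n \<and> d u = 0}" by auto
    then show ?thesis by (simp add: sum.If_cases)
  qed
  also have "(\<Sum>v<n. if d v = 1 then 2 * (b - c) else 0) = real (card {u. u < n \<and> d u = 1}) * (2 * (b - c))"
  proof -
    have "{..<n} \<inter> {v. d v = 1} = {u. u < n \<and> d u = 1}" by auto
    then show ?thesis by (simp add: sum.If_cases)
  qed
  finally show ?thesis unfolding Tf_def Wf_def Bf_def white_def blue_def
    by (simp add: algebra_simps)
qed

lemma size_T: "real (size (choice_mset n d)) = Tf n d"
  unfolding Tf_def cm_size ..

lemma one_step:
  assumes "n \<ge> 1"
  shows "measure_pmf.expectation (choice_step n d) (\<lambda>d'. F (Tf n d') (Wf n d') (Bf n d'))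
     = (Wf n d * F (Tf n d + 1) (Wf n d - 1) (Bf n d + 2) + Bf n d * F (Tf n d + 1) (Wf n d) (Bf n d - 2)
        + (Tf n d - Wf n d - Bf n d) * F (Tf n d + 1) (Wf n d) (Bf n d)) / Tf n d"
proof -
  let ?M = "choice_mset n d"
  let ?a = "F (Tf n d + 1) (Wf n d - 1) (Bf n d + 2)"
  let ?b = "F (Tf n d + 1) (Wf n d) (Bf n d - 2)"
  let ?c = "F (Tf n d + 1) (Wf n d) (Bf n d)"
  have ne: "?M \<noteq> {#}" using cm_ne[OF assms] .
  have "measure_pmf.expectation (choice_step n d) (\<lambda>d'. F (Tf n d') (Wf n d') (Bf n d'))
     = measure_pmf.expectation (pmf_of_multiset ?M) (\<lambda>v. F (Tf n (d(v := Suc (d v)))) (Wf n (d(v := Suc (d v)))) (Bf n (d(v := Suc (d v)))))"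
    unfolding choice_step_def by simp
  also have "\<dots> = (\<Sum>v\<in>{..<n}. F (Tf n (d(v := Suc (d v)))) (Wf n (d(v := Suc (d v)))) (Bf n (d(v := Suc (d v)))) * pmf (pmf_of_multiset ?M) v)"
    by (rule integral_measure_pmf_real) (auto simp: set_pmf_of_multiset[OF ne] cm_set)
  also have "\<dots> = (\<Sum>v<n. real (Suc (d v)) * (if d v = 0 then ?a else if d v = 1 then ?b else ?c)) / Tf n d"
    unfolding sum_divide_distrib
    by (rule sum.cong) (auto simp: pmf_of_multiset[OF ne] cm_count size_T white_upd blue_upd T_upd)
  also have "\<dots> = (Tf n d * ?c + Wf n d * (?a - ?c) + Bf n d * (?b - ?c)) / Tf n d"
    by (simp only: sum_split)
  finally show ?thesis by (simp add: algebra_simps)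
qed


lemma Tf_ge: "real n \<le> Tf n d"
proof -
  have "n \<le> (\<Sum>v<n. Suc (d v))" using sum_mono[of "{..<n}" "\<lambda>_. 1::nat" "\<lambda>v. Suc (d v)"] by simp
  then show ?thesis unfolding Tf_def by (simp only: of_nat_le_iff)
qed

lemma Tf_alt: "Tf n d = real n + real (\<Sum>v<n. d v)"
proof -
  have "(\<Sum>v<n. Suc (d v)) = n + (\<Sum>v<n. d v)" by (induction n) auto
  then show ?thesis unfolding Tf_def by simp
qed

lemma E_sum:
  assumes "finite (set_pmf p)"
  shows "measure_pmf.expectation p f = (\<Sum>a\<in>set_pmf p. f a * pmf p a)"
  by (rule integral_measure_pmf_real) (use assms in auto)

lemma invariant:
  assumes n: "n \<ge> 1"
    and inv: "\<And>T W B. T * H T W B = W * H (T+1) (W-1) (B+2) + B * H (T+1) W (B-2) + (T - W - B) * H (T+1) W B"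
  shows "measure_pmf.expectation (parents n s d) (\<lambda>d'. H (Tf n d') (Wf n d') (Bf n d')) = H (Tf n d) (Wf n d) (Bf n d)"
proof (induction s)
  case 0 then show ?case by simp
next
  case (Suc s)
  let ?p = "parents n s d"
  let ?h = "\<lambda>d'. H (Tf n d') (Wf n d') (Bf n d')"
  have fin: "finite (set_pmf ?p)" by (rule finite_parents[OF n])
  have fin2: "finite (set_pmf (choice_step n x))" for x
    unfolding set_choice_step[OF n] by (rule finite_imageI) (rule finite_lessThan)
  have step: "measure_pmf.expectation (choice_step n a) ?h = ?h a" for a
  proof -
    have pos: "Tf n a > 0" using Tf_ge[of n a] n by linarith
    show ?thesis unfolding one_step[OF n] inv[symmetric] using pos by simp
  qed
  have "measure_pmf.expectation (parents n (Suc s) d) ?h = (\<Sum>a\<in>set_pmf ?p. pmf ?p a *\<^sub>R measure_pmf.expectation (choice_step n a) ?h)"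
    unfolding parents.simps by (rule pmf_expectation_bind[OF fin fin2]) simp
  also have "\<dots> = (\<Sum>a\<in>set_pmf ?p. ?h a * pmf ?p a)" by (simp add: step mult.commute)
  also have "\<dots> = measure_pmf.expectation ?p ?h" by (rule E_sum[OF fin, symmetric])
  finally show ?case using Suc by simp
qed

lemma expect_g:
  assumes n: "n \<ge> 1"
    and inv: "\<And>T W B. T * H T W B = W * H (T+1) (W-1) (B+2) + B * H (T+1) W (B-2) + (T - W - B) * H (T+1) W B"
    and supp: "\<And>d'. d' \<in> set_pmf (parents n s d) \<Longrightarrow> H (Tf n d') (Wf n d') (Bf n d') = K * G (Wf n d') (Bf n d')"
    and K: "K \<noteq> 0"
  shows "measure_pmf.expectation (parents n s d) (\<lambda>d'. G (Wf n d') (Bf n d')) = H (Tf n d) (Wf n d) (Bf n d) / K"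
proof -
  let ?p = "parents n s d"
  have fin: "finite (set_pmf ?p)" by (rule finite_parents[OF n])
  have "measure_pmf.expectation ?p (\<lambda>d'. G (Wf n d') (Bf n d')) = (\<Sum>a\<in>set_pmf ?p. G (Wf n a) (Bf n a) * pmf ?p a)"
    by (rule E_sum[OF fin])
  also have "\<dots> = (\<Sum>a\<in>set_pmf ?p. H (Tf n a) (Wf n a) (Bf n a) * pmf ?p a) / K"
    unfolding sum_divide_distrib by (rule sum.cong) (use K supp in auto)
  also have "(\<Sum>a\<in>set_pmf ?p. H (Tf n a) (Wf n a) (Bf n a) * pmf ?p a) = measure_pmf.expectation ?p (\<lambda>d'. H (Tf n d') (Wf n d') (Bf n d'))"
    by (rule E_sum[OF fin, symmetric])
  also have "\<dots> = H (Tf n d) (Wf n d) (Bf n d)" by (rule invariant[OF n inv])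
  finally show ?thesis .
qed

definition "h1 T W B = (T-1)*(W::real)"
definition "h2a T W B = (T-1)*(T-2)*(W^2 - (W::real))"
definition "h2b T W B = (T-1)*(T-2)*(B - 2*(W::real))"
definition "h3 T W B = (T-1)*(T-2)*(T-3)*(W*B - 2*W^2 + 2*(W::real))"
definition "h4 T W B = (T-1)*(T-2)*(T-3)*(T-4)*((B-2*W)^2 - 4*W - 2*(B::real))"

lemma inv1: "T * h1 T W B = W * h1 (T+1) (W-1) (B+2) + B * h1 (T+1) W (B-2) + (T - W - B) * h1 (T+1) W B"
  unfolding h1_def by algebra
lemma inv2a: "T * h2a T W B = W * h2a (T+1) (W-1) (B+2) + B * h2a (T+1) W (B-2) + (T - W - B) * h2a (T+1) W B"
  unfolding h2a_def by algebra
lemma inv2b: "T * h2b T W B = W * h2b (T+1) (W-1) (B+2) + B * h2b (T+1) W (B-2) + (T - W - B) * h2b (T+1) W B"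
  unfolding h2b_def by algebra
lemma inv3: "T * h3 T W B = W * h3 (T+1) (W-1) (B+2) + B * h3 (T+1) W (B-2) + (T - W - B) * h3 (T+1) W B"
  unfolding h3_def by algebra
lemma inv4: "T * h4 T W B = W * h4 (T+1) (W-1) (B+2) + B * h4 (T+1) W (B-2) + (T - W - B) * h4 (T+1) W B"
  unfolding h4_def by algebra


lemma gen1:
  fixes k1 k2 p2 p1 :: real
  assumes "k1 \<noteq> 0" "k2 \<noteq> 0"
  shows "p2 / (k1 * k2) + p1 / k1 = (p2 + p1 * k2) / (k1 * k2)"
  using assms by (simp add: field_simps)

lemma gen2:
  fixes k1 k2 k3 k4 p4 p3 p2a p2b p1 :: real
  assumes "k1 \<noteq> 0" "k2 \<noteq> 0" "k3 \<noteq> 0" "k4 \<noteq> 0"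
  shows "p4 / (k1 * k2 * k3 * k4) + 4 * (p3 / (k1 * k2 * k3)) + 4 * (p2a / (k1 * k2)) + 2 * (p2b / (k1 * k2)) + 4 * (p1 / k1)
    = (p4 + 4 * p3 * k4 + (4 * p2a + 2 * p2b) * k3 * k4 + 4 * p1 * k2 * k3 * k4) / (k1 * k2 * k3 * k4)"
  using assms by (simp add: field_simps)

lemma alg1:
  fixes M N W B :: real
  assumes "M*N + N \<ge> 5"
  shows "h2a (M*N - M + N) W B / ((M*N + N - 1) * (M*N + N - 2)) + h1 (M*N - M + N) W B / (M*N + N - 1)
     = (M + 1) * (N - 1) * ((M*N - M + N - 2) * W + M) * W / ((M*N + N - 2) * (M*N + N - 1))"
proof -
  have a: "M*N + N - 1 \<noteq> 0" "M*N + N - 2 \<noteq> 0" using assms by auto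
  have d: "(M*N + N - 1) * (M*N + N - 2) = (M*N + N - 2) * (M*N + N - 1)" by (simp add: mult.commute)
  have n: "h2a (M*N - M + N) W B + h1 (M*N - M + N) W B * (M*N + N - 2) = (M + 1) * (N - 1) * ((M*N - M + N - 2) * W + M) * W"
    unfolding h2a_def h1_def by algebra
  show ?thesis by (subst gen1[OF a]) (simp only: n d)
qed

lemma alg2:
  fixes M N W B :: real
  assumes "M*N + N \<ge> 5"
  shows "h4 (M*N - M + N) W B / ((M*N + N - 1) * (M*N + N - 2) * (M*N + N - 3) * (M*N + N - 4))
      + 4 * (h3 (M*N - M + N) W B / ((M*N + N - 1) * (M*N + N - 2) * (M*N + N - 3)))
      + 4 * (h2a (M*N - M + N) W B / ((M*N + N - 1) * (M*N + N - 2)))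
      + 2 * (h2b (M*N - M + N) W B / ((M*N + N - 1) * (M*N + N - 2)))
      + 4 * (h1 (M*N - M + N) W B / (M*N + N - 1))
       = (M + 1) * (N - 1) *
         ( (4*M*(M - 1)*(M*N - M + N - 2)) * W\<^sup>2
         + (4*M*(M*N - M + N - 3)*(M*N - M + N - 2)) * W * B
         + ((M*N - M + N - 4)*(M*N - M + N - 3)*(M*N - M + N - 2)) * B\<^sup>2
         + (4*M*(M^2*N^2 - M^2*N + 2*M*N^2 + M^2 - 7*M*N + N^2 + M - 6*N + 10)) * W
         + (2*M*(M*N - M + N - 2)*(2*M*N - M + 2*N - 7)) * B )
         / ((M*N + N - 4) * (M*N + N - 3) * (M*N + N - 2) * (M*N + N - 1))"
proof -
  have a: "M*N + N - 1 \<noteq> 0" "M*N + N - 2 \<noteq> 0" "M*N + N - 3 \<noteq> 0" "M*N + N - 4 \<noteq> 0" using assms by auto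
  have d: "(M*N + N - 1) * (M*N + N - 2) * (M*N + N - 3) * (M*N + N - 4) = (M*N + N - 4) * (M*N + N - 3) * (M*N + N - 2) * (M*N + N - 1)"
    by (simp only: mult_ac)
  have n: "h4 (M*N - M + N) W B + 4 * h3 (M*N - M + N) W B * (M*N + N - 4)
     + (4 * h2a (M*N - M + N) W B + 2 * h2b (M*N - M + N) W B) * (M*N + N - 3) * (M*N + N - 4)
     + 4 * h1 (M*N - M + N) W B * (M*N + N - 2) * (M*N + N - 3) * (M*N + N - 4)
     = (M + 1) * (N - 1) *
         ( (4*M*(M - 1)*(M*N - M + N - 2)) * W\<^sup>2
         + (4*M*(M*N - M + N - 3)*(M*N - M + N - 2)) * W * B
         + ((M*N - M + N - 4)*(M*N - M + N - 3)*(M*N - M + N - 2)) * B\<^sup>2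
         + (4*M*(M^2*N^2 - M^2*N + 2*M*N^2 + M^2 - 7*M*N + N^2 + M - 6*N + 10)) * W
         + (2*M*(M*N - M + N - 2)*(2*M*N - M + 2*N - 7)) * B )"
    unfolding h4_def h3_def h2a_def h2b_def h1_def by algebra
  show ?thesis by (subst gen2[OF a]) (simp only: n d)
qed


theorem proposition2:
  fixes m n :: nat and d :: "nat \<Rightarrow> nat"
  assumes "m \<ge> 1" and "n \<ge> 1" and "(m + 1) * n \<ge> 5"
    and "d \<in> set_pmf (circuit m (n - 1))"
  defines "W \<equiv> real (white n d)" and "B \<equiv> real (blue n d)"
    and "M \<equiv> real m" and "N \<equiv> real n"
  shows
    "measure_pmf.expectation (parents n m d) (\<lambda>d'. (real (white n d'))\<^sup>2)
       = (M + 1) * (N - 1) * ((M*N - M + N - 2) * W + M) * W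
         / ((M*N + N - 2) * (M*N + N - 1))
    \<and>
     measure_pmf.expectation (parents n m d) (\<lambda>d'. (real (blue n d'))\<^sup>2)
       = (M + 1) * (N - 1) *
         ( (4*M*(M - 1)*(M*N - M + N - 2)) * W\<^sup>2
         + (4*M*(M*N - M + N - 3)*(M*N - M + N - 2)) * W * B
         + ((M*N - M + N - 4)*(M*N - M + N - 3)*(M*N - M + N - 2)) * B\<^sup>2
         + (4*M*(M^2*N^2 - M^2*N + 2*M*N^2 + M^2 - 7*M*N + N^2 + M - 6*N + 10)) * W
         + (2*M*(M*N - M + N - 2)*(2*M*N - M + 2*N - 7)) * B )
         / ((M*N + N - 4) * (M*N + N - 3) * (M*N + N - 2) * (M*N + N - 1))"
proof -
  have n: "n \<ge> 1" by fact
  let ?p = "parents n m d"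
  have fin: "finite (set_pmf ?p)" by (rule finite_parents[OF n])
  have sum0: "(\<Sum>v<n. d v) = m * (n - 1)"
    using circuit_support[OF assms(4)] n by simp
  have T0: "Tf n d = M*N - M + N"
    unfolding Tf_alt sum0 M_def N_def using n by (simp add: of_nat_diff algebra_simps)
  have Tsupp: "Tf n d' = M*N + N" if "d' \<in> set_pmf ?p" for d'
    using parents_support[OF n that] T0 unfolding Tf_alt M_def by (simp add: algebra_simps)
  have five: "M*N + N \<ge> 5"
  proof -
    have "real ((m + 1) * n) \<ge> 5" using assms(3) by (simp only: of_nat_le_iff[symmetric]) 
    then show ?thesis unfolding M_def N_def by (simp add: algebra_simps)
  qed
  have k: "M*N + N - 1 \<noteq> 0" "M*N + N - 2 \<noteq> 0" "M*N + N - 3 \<noteq> 0" "M*N + N - 4 \<noteq> 0"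
    using five by auto
  have WB: "Wf n d = W" "Bf n d = B" unfolding W_def B_def Wf_def Bf_def by simp_all
  have E1: "measure_pmf.expectation ?p (\<lambda>d'. Wf n d') = h1 (M*N - M + N) W B / (M*N + N - 1)"
    using expect_g[OF n inv1, of m d "M*N + N - 1" "\<lambda>W B. W"] k Tsupp T0 WB
    by (simp add: h1_def)
  have E2a: "measure_pmf.expectation ?p (\<lambda>d'. Wf n d' ^ 2 - Wf n d') = h2a (M*N - M + N) W B / ((M*N + N - 1) * (M*N + N - 2))"
    using expect_g[OF n inv2a, of m d "(M*N + N - 1) * (M*N + N - 2)" "\<lambda>W B. W ^ 2 - W"] k Tsupp T0 WB
    by (simp add: h2a_def)
  have E2b: "measure_pmf.expectation ?p (\<lambda>d'. Bf n d' - 2 * Wf n d') = h2b (M*N - M + N) W B / ((M*N + N - 1) * (M*N + N - 2))"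
    using expect_g[OF n inv2b, of m d "(M*N + N - 1) * (M*N + N - 2)" "\<lambda>W B. B - 2 * W"] k Tsupp T0 WB
    by (simp add: h2b_def)
  have E3: "measure_pmf.expectation ?p (\<lambda>d'. Wf n d' * Bf n d' - 2 * Wf n d' ^ 2 + 2 * Wf n d') = h3 (M*N - M + N) W B / ((M*N + N - 1) * (M*N + N - 2) * (M*N + N - 3))"
    using expect_g[OF n inv3, of m d "(M*N + N - 1) * (M*N + N - 2) * (M*N + N - 3)" "\<lambda>W B. W * B - 2 * W ^ 2 + 2 * W"] k Tsupp T0 WB
    by (simp add: h3_def)
  have E4: "measure_pmf.expectation ?p (\<lambda>d'. (Bf n d' - 2 * Wf n d') ^ 2 - 4 * Wf n d' - 2 * Bf n d') = h4 (M*N - M + N) W B / ((M*N + N - 1) * (M*N + N - 2) * (M*N + N - 3) * (M*N + N - 4))"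
    using expect_g[OF n inv4, of m d "(M*N + N - 1) * (M*N + N - 2) * (M*N + N - 3) * (M*N + N - 4)" "\<lambda>W B. (B - 2 * W) ^ 2 - 4 * W - 2 * B"] k Tsupp T0 WB
    by (simp add: h4_def)
  have int: "integrable (measure_pmf ?p) f" for f :: "_ \<Rightarrow> real"
    by (rule integrable_measure_pmf_finite[OF fin])
  have L1: "(\<lambda>d'. (real (white n d'))\<^sup>2) = (\<lambda>d'. (Wf n d' ^ 2 - Wf n d') + Wf n d')"
    by (simp add: Wf_def)
  have L2: "(\<lambda>d'. (real (blue n d'))\<^sup>2) = (\<lambda>d'. ((Bf n d' - 2 * Wf n d') ^ 2 - 4 * Wf n d' - 2 * Bf n d')
      + 4 * (Wf n d' * Bf n d' - 2 * Wf n d' ^ 2 + 2 * Wf n d') + 4 * (Wf n d' ^ 2 - Wf n d')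
      + 2 * (Bf n d' - 2 * Wf n d') + 4 * Wf n d')"
    by (rule ext) (simp add: Bf_def power2_eq_square algebra_simps)
  have X1: "measure_pmf.expectation ?p (\<lambda>d'. (real (white n d'))\<^sup>2)
     = measure_pmf.expectation ?p (\<lambda>d'. Wf n d' ^ 2 - Wf n d') + measure_pmf.expectation ?p (\<lambda>d'. Wf n d')"
    unfolding L1 by (rule Bochner_Integration.integral_add[OF int int])
  have X2: "measure_pmf.expectation ?p (\<lambda>d'. (real (blue n d'))\<^sup>2)
     = measure_pmf.expectation ?p (\<lambda>d'. (Bf n d' - 2 * Wf n d') ^ 2 - 4 * Wf n d' - 2 * Bf n d')
      + 4 * measure_pmf.expectation ?p (\<lambda>d'. Wf n d' * Bf n d' - 2 * Wf n d' ^ 2 + 2 * Wf n d')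
      + 4 * measure_pmf.expectation ?p (\<lambda>d'. Wf n d' ^ 2 - Wf n d')
      + 2 * measure_pmf.expectation ?p (\<lambda>d'. Bf n d' - 2 * Wf n d') + 4 * measure_pmf.expectation ?p (\<lambda>d'. Wf n d')"
    unfolding L2 by (simp add: int)
  show ?thesis
    unfolding X1 X2 E1 E2a E2b E3 E4 using alg1[OF five, of W B] alg2[OF five, of W B] by simp
qed

end
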